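(* Let $p\ge 3$ and let $\upsilon$ be a cyclic unimodal permutation of $\{0,1,\dots,p-1\}$ with folding point $m$, and write $x_i=\upsilon^i(m)$ for $i\ge 0$. Let $\hat\upsilon$ be the piecewise-linear extension of $\upsilon$ to $[0,p-1]$. Suppose there is an integer $e\in\{0,\dots,p-2\}$ such that $m$ lies strictly between $\upsilon(e)$ and $\upsilon(e+1)$ (there is at most one such $e$). For $1\le i\le p-1$ let $\rho_i=\#\{l: 1\le l\le i-1,\ x_l>m\}$ (so $\rho_1=0$). Suppose $j\in\{1,\dots,p-1\}$ satisfies either ($x_j=e$ and $\rho_j$ is odd) or ($x_j=e+1$ and $\rho_j$ is even). Fix $0<\varepsilon<1/4$ and for $\sigma\in\{-,+\}$ consider the set of $p+j+1$ real numbers consisting of $0,1,\dots,p-1$, the point $r_\sigma$ where $r_-=m-\varepsilon$, $r_+=m+\varepsilon$, and the points $r_1,\dots,r_j$ where $r_i=x_i-\varepsilon$ if $\rho_i$ is even and $r_i=x_i+\varepsilon$ if $\rho_i$ is odd. Define a bijection $g_\sigma$ of this set by $x_k\mapsto x_{k+1}$ for $0\le k\le p-2$, $x_{p-1}\mapsto r_\sigma$, $r_\sigma\mapsto r_1$, $r_i\mapsto r_{i+1}$ for $1\le i\le j-1$, and $r_j\mapsto m$. Let $\upsilon_\sigma$ be the permutation of $\{0,1,\dots,p+j\}$ obtained by transporting $g_\sigma$ through the order-preserving bijection of this set onto $\{0,\dots,p+j\}$, and let $\beta_\sigma\in B_{p+j+1}$ be the positive permutation braid inducing $\upsilon_\sigma$.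 Then: (1) if $e<m$ (the non-dynamical preimage of $m$ lies to the left of $m$), then $\beta_+$ and $\beta_-$ are conjugate in $B_{p+j+1}$; (2) if $e\ge m$ (the non-dynamical preimage lies to the right of $m$), then $\beta_+$ and $\beta_-$ are reverse-conjugate, i.e. $\beta_-\cdot\gamma=\gamma^{-1}\cdot\beta_+$ for some $\gamma\in B_{p+j+1}$.
   Context: A permutation $\upsilon$ of $\{0,\dots,p-1\}$ is unimodal with folding point $m\in\{1,\dots,p-2\}$ if $\upsilon$ is order-preserving on $\{0,\dots,m\}$ and order-reversing on $\{m,\dots,p-1\}$; it is cyclic if it is a single $p$-cycle. The integer $e$ describes the "interval containing the non-dynamical preimage" $[e,e+1]$ of $m$ (the dynamical preimage being $\upsilon^{-1}(m)=x_{p-1}$), and $\rho_i$ counts how many of $x_1,\dots,x_{i-1}$ lie to the right of $m$. The relative order of the $p+j+1$ points above does not depend on $\varepsilon\in(0,1/4)$. Braids on $n$ strands are drawn with $n$ initial endpoints at the top and $n$ terminal endpoints at the bottom, each labelled $0,\dots,n-1$ from left to right; a braid induces the permutation sending $i$ to the label of the terminal endpoint of the strand starting at initial endpoint $i$. The positive permutation braid inducing a permutation $\pi$ is the unique braid inducing $\pi$ in which every pair of strands crosses at most once and, at each crossing, the strand whose initial endpoint is further to the left passes over the other. For braids $\alpha,\beta$, $\alpha\cdot\beta$ denotes the braid obtained by placing $\beta$ on top of $\alpha$. *)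

theory Defs
  imports Complex_Main
begin

definition cyclic_perm :: "nat \<Rightarrow> (nat \<Rightarrow> nat) \<Rightarrow> bool" where
  "cyclic_perm p v \<longleftrightarrow> bij_betw v {..<p} {..<p} \<and>
     (\<forall>a<p. \<forall>b<p. \<exists>k. (v ^^ k) a = b)"

definition unimodal :: "nat \<Rightarrow> (nat \<Rightarrow> nat) \<Rightarrow> nat \<Rightarrow> bool" where
  "unimodal p v m \<longleftrightarrow> 1 \<le> m \<and> m + 2 \<le> p \<and>
     (\<forall>a b. a < b \<and> b \<le> m \<longrightarrow> v a < v b) \<and>
     (\<forall>a b. m \<le> a \<and> a < b \<and> b \<le> p - 1 \<longrightarrow> v b < v a)"

definition orb :: "(nat \<Rightarrow> nat) \<Rightarrow> nat \<Rightarrow> nat \<Rightarrow> nat" where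
  "orb v m i = (v ^^ i) m"

definition rho :: "(nat \<Rightarrow> nat) \<Rightarrow> nat \<Rightarrow> nat \<Rightarrow> nat" where
  "rho v m i = card {l \<in> {1..<i}. orb v m l > m}"

definition rpt :: "(nat \<Rightarrow> nat) \<Rightarrow> nat \<Rightarrow> real \<Rightarrow> nat \<Rightarrow> real" where
  "rpt v m eps i = real (orb v m i) + (if even (rho v m i) then - eps else eps)"

text \<open>r_sigma; the boolean s encodes sigma: True = +, False = -\<close>
definition rsig :: "nat \<Rightarrow> real \<Rightarrow> bool \<Rightarrow> real" where
  "rsig m eps s = real m + (if s then eps else - eps)"

definition Sset :: "nat \<Rightarrow> (nat \<Rightarrow> nat) \<Rightarrow> nat \<Rightarrow> nat \<Rightarrow> real \<Rightarrow> bool \<Rightarrow> real set" where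
  "Sset p v m j eps s = real ` {..<p} \<union> {rsig m eps s} \<union> rpt v m eps ` {1..j}"

definition gmap :: "nat \<Rightarrow> (nat \<Rightarrow> nat) \<Rightarrow> nat \<Rightarrow> nat \<Rightarrow> real \<Rightarrow> bool \<Rightarrow> real \<Rightarrow> real" where
  "gmap p v m j eps s y =
    (if y = rsig m eps s then rpt v m eps 1
     else if y = rpt v m eps j then real m
     else if (\<exists>i. 1 \<le> i \<and> i < j \<and> y = rpt v m eps i)
       then rpt v m eps (Suc (THE i. 1 \<le> i \<and> i < j \<and> y = rpt v m eps i))
     else if y = real (orb v m (p - 1)) then rsig m eps s
     else real (v (nat \<lfloor>y\<rfloor>)))"

text \<open>upsilon_sigma: g_sigma transported by the order-preserving bijection Sset -> {0..p+j}\<close>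
definition upsig :: "nat \<Rightarrow> (nat \<Rightarrow> nat) \<Rightarrow> nat \<Rightarrow> nat \<Rightarrow> real \<Rightarrow> bool \<Rightarrow> nat \<Rightarrow> nat" where
  "upsig p v m j eps s k =
     (let S = Sset p v m j eps s
      in card {z \<in> S. z < gmap p v m j eps s (sorted_list_of_set S ! k)})"

text \<open>A letter (i, True) is sigma_i, (i, False) is sigma_i^{-1}; sigma_i is the crossing of the
 strands in positions i and i+1 (0-based) in which the strand at position i passes over.
 A word [a1,...,ak] denotes the product a1 . a2 . ... . ak, where alpha . beta places beta on top
 of alpha; so ak is the topmost crossing.\<close>

type_synonym bword = "(nat \<times> bool) list"

definition valid_word :: "nat \<Rightarrow> bword \<Rightarrow> bool" where
  "valid_word n w \<longleftrightarrow> (\<forall>(i, b) \<in> set w. Suc i < n)"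

inductive beq :: "nat \<Rightarrow> bword \<Rightarrow> bword \<Rightarrow> bool" for n where
  beq_refl: "beq n w w"
| beq_sym: "beq n u v \<Longrightarrow> beq n v u"
| beq_trans: "beq n u v \<Longrightarrow> beq n v w \<Longrightarrow> beq n u w"
| beq_ctx: "beq n u v \<Longrightarrow> beq n (a @ u @ b) (a @ v @ b)"
| beq_cancel: "Suc i < n \<Longrightarrow> beq n [(i, b), (i, \<not> b)] []"
| beq_comm: "Suc i < n \<Longrightarrow> Suc k < n \<Longrightarrow> i + 2 \<le> k \<Longrightarrow>
     beq n [(i, True), (k, True)] [(k, True), (i, True)]"
| beq_braid: "i + 2 < n \<Longrightarrow>
     beq n [(i, True), (Suc i, True), (i, True)] [(Suc i, True), (i, True), (Suc i, True)]"

definition binv :: "bword \<Rightarrow> bword" where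
  "binv w = rev (map (\<lambda>(i, b). (i, \<not> b)) w)"

definition pos_word :: "nat list \<Rightarrow> bword" where
  "pos_word w = map (\<lambda>i. (i, True)) w"

definition braid_conj :: "nat \<Rightarrow> bword \<Rightarrow> bword \<Rightarrow> bool" where
  "braid_conj n b1 b2 \<longleftrightarrow> (\<exists>g. valid_word n g \<and> beq n b2 (binv g @ b1 @ g))"

definition braid_revconj :: "nat \<Rightarrow> bword \<Rightarrow> bword \<Rightarrow> bool" where
  "braid_revconj n bplus bminus \<longleftrightarrow>
     (\<exists>g. valid_word n g \<and> beq n (bminus @ g) (binv g @ bplus))"

text \<open>arr : position -> initial label of the strand currently at that position.\<close>
definition swp :: "nat \<Rightarrow> (nat \<Rightarrow> nat) \<Rightarrow> nat \<Rightarrow> nat" where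
  "swp j arr = (\<lambda>k. if k = j then arr (Suc j) else if k = Suc j then arr j else arr k)"

text \<open>Processing crossings top to bottom; each crossing recorded as (over strand, under strand)
 by initial labels.\<close>
fun crossings :: "(nat \<Rightarrow> nat) \<Rightarrow> nat list \<Rightarrow> (nat \<times> nat) list" where
  "crossings arr [] = []"
| "crossings arr (j # js) = (arr j, arr (Suc j)) # crossings (swp j arr) js"

fun final_arr :: "(nat \<Rightarrow> nat) \<Rightarrow> nat list \<Rightarrow> nat \<Rightarrow> nat" where
  "final_arr arr [] = arr"
| "final_arr arr (j # js) = final_arr (swp j arr) js"

text \<open>w (a list of generator indices, product order) is a positive word on n strands realizing
 the positive permutation braid inducing perm: it induces perm (strand from initial endpoint i ends
 at terminal endpoint perm i), every pair of strands crosses at most once, and at each crossing the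
 strand with the smaller initial endpoint passes over.\<close>
definition ppb_word :: "nat \<Rightarrow> (nat \<Rightarrow> nat) \<Rightarrow> nat list \<Rightarrow> bool" where
  "ppb_word n perm w \<longleftrightarrow>
     (\<forall>j \<in> set w. Suc j < n) \<and>
     (\<forall>i<n. final_arr id (rev w) (perm i) = i) \<and>
     (\<forall>(a, b) \<in> set (crossings id (rev w)). a < b) \<and>
     (\<forall>a b. length (filter (\<lambda>c. c = (a, b) \<or> c = (b, a)) (crossings id (rev w))) \<le> 1)"

end

theory Submission
  imports Defs
begin


lemma idx_sorted_nth:
  fixes S :: "'a::linorder set"
  assumes "finite S" "k < card S"
  shows "sorted_list_of_set S ! k \<in> S"
    and "card {z \<in> S. z < sorted_list_of_set S ! k} = k"
proof -
  let ?xs = "sorted_list_of_set S"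
  have st: "sorted_wrt (<) ?xs" using assms(1) by (simp add: strict_sorted_list_of_set)
  have d: "distinct ?xs" using assms(1) by simp
  have len: "length ?xs = card S" using assms(1) by simp
  have set: "set ?xs = S" using assms(1) by simp
  show "?xs ! k \<in> S" using assms len set by (metis nth_mem)
  have "{z \<in> S. z < ?xs ! k} = set (take k ?xs)"
  proof (rule set_eqI, rule iffI)
    fix z assume "z \<in> {z \<in> S. z < ?xs ! k}"
    then obtain i where i: "i < length ?xs" "?xs ! i = z" "z < ?xs ! k" using set
      by (metis (mono_tags, lifting) in_set_conv_nth mem_Collect_eq)
    have "i < k"
    proof (rule ccontr)
      assume "\<not> i < k"
      then have "k \<le> i" by simp
      then have "?xs ! k \<le> ?xs ! i" using st i(1)
        by (metis le_less sorted_wrt_nth_less order.strict_implies_order)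
      then show False using i by simp
    qed
    then show "z \<in> set (take k ?xs)" using i by (metis in_set_conv_nth length_take min_less_iff_conj nth_take)
  next
    fix z assume "z \<in> set (take k ?xs)"
    then obtain i where "i < k" "?xs ! i = z" using assms len
      by (auto simp: in_set_conv_nth)
    then show "z \<in> {z \<in> S. z < ?xs ! k}" using st assms len set
      by (metis (mono_tags, lifting) mem_Collect_eq nth_mem order.strict_trans sorted_wrt_nth_less)
  qed
  then show "card {z \<in> S. z < ?xs ! k} = k"
    using d assms len by (simp add: distinct_card)
qed

lemma idx_strict_mono:
  fixes S :: "'a::linorder set"
  assumes "finite S" "y \<in> S" "y' \<in> S" "y < y'"
  shows "card {z \<in> S. z < y} < card {z \<in> S. z < y'}"
  apply (rule psubset_card_mono)
  using assms by auto

lemma idx_inj: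
  fixes S :: "'a::linorder set"
  assumes "finite S" "y \<in> S" "y' \<in> S" "card {z \<in> S. z < y} = card {z \<in> S. z < y'}"
  shows "y = y'"
  using idx_strict_mono[OF assms(1) assms(2,3)] idx_strict_mono[OF assms(1) assms(3,2)] assms(4)
  by (metis less_irrefl neq_iff)

lemma idx_lt_card:
  fixes S :: "'a::linorder set"
  assumes "finite S" "y \<in> S"
  shows "card {z \<in> S. z < y} < card S"
  apply (rule psubset_card_mono) using assms by auto

lemma sorted_nth_idx:
  fixes S :: "'a::linorder set"
  assumes "finite S" "y \<in> S"
  shows "sorted_list_of_set S ! card {z \<in> S. z < y} = y"
  using idx_sorted_nth[OF assms(1) idx_lt_card[OF assms]] idx_inj[OF assms(1)] assms(2)
  by metis



definition tau :: "nat \<Rightarrow> nat \<Rightarrow> nat" where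
  "tau a k = (if k = a then Suc a else if k = Suc a then a else k)"

lemma swp_tau: "swp j arr = arr \<circ> tau j"
  by (auto simp: swp_def tau_def)

lemma tau_tau[simp]: "tau j (tau j x) = x"
  by (auto simp: tau_def)

lemma bij_tau: "bij (tau j)"
  by (metis bij_betw_def inj_def surj_def tau_tau)

lemma tau_mono: "x < y \<Longrightarrow> \<not> (x = j \<and> y = Suc j) \<Longrightarrow> tau j x < tau j y"
  by (auto simp: tau_def)

fun apath :: "(nat \<Rightarrow> nat) \<Rightarrow> nat list \<Rightarrow> bool" where
  "apath arr [] = True"
| "apath arr (j # js) = (arr j < arr (Suc j) \<and> apath (swp j arr) js)"

definition Inv :: "(nat \<Rightarrow> nat) \<Rightarrow> (nat \<times> nat) set" where
  "Inv arr = {(c, d). \<exists>x y. x < y \<and> arr x = d \<and> arr y = c \<and> c < d}"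

definition good :: "nat \<Rightarrow> (nat \<Rightarrow> nat) \<Rightarrow> bool" where
  "good n arr \<longleftrightarrow> bij arr \<and> (\<forall>x\<ge>n. arr x = x)"

definition okw :: "nat \<Rightarrow> nat list \<Rightarrow> bool" where
  "okw n js \<longleftrightarrow> (\<forall>j\<in>set js. Suc j < n)"

lemma okw_simps[simp]: "okw n []" "okw n (j # js) \<longleftrightarrow> Suc j < n \<and> okw n js"
  "okw n (xs @ ys) \<longleftrightarrow> okw n xs \<and> okw n ys" "okw n (rev xs) = okw n xs"
  by (auto simp: okw_def)

lemma good_id: "good n id" by (simp add: good_def)

lemma good_swp: "good n arr \<Longrightarrow> Suc j < n \<Longrightarrow> good n (swp j arr)"
  unfolding good_def swp_tau using bij_tau bij_comp
  by (auto simp: tau_def)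

lemma good_final: "good n arr \<Longrightarrow> okw n js \<Longrightarrow> good n (final_arr arr js)"
  by (induction js arbitrary: arr) (auto simp: good_swp)

lemma inj_swp: "inj arr \<Longrightarrow> inj (swp j arr)"
  unfolding swp_tau using bij_tau by (metis bij_is_inj inj_compose)

lemma apath_append: "apath arr (xs @ ys) \<longleftrightarrow> apath arr xs \<and> apath (final_arr arr xs) ys"
  by (induction xs arbitrary: arr) auto

lemma final_append: "final_arr arr (xs @ ys) = final_arr (final_arr arr xs) ys"
  by (induction xs arbitrary: arr) auto

lemma Inv_swp:
  assumes "inj arr" "arr j < arr (Suc j)"
  shows "Inv (swp j arr) = insert (arr j, arr (Suc j)) (Inv arr)"
    and "(arr j, arr (Suc j)) \<notin> Inv arr"
proof -
  show "(arr j, arr (Suc j)) \<notin> Inv arr"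
  proof
    assume "(arr j, arr (Suc j)) \<in> Inv arr"
    then obtain x y where "x < y" "arr x = arr (Suc j)" "arr y = arr j" by (auto simp: Inv_def)
    then show False using assms(1) by (metis Suc_lessD inj_eq not_less_eq)
  qed
  show "Inv (swp j arr) = insert (arr j, arr (Suc j)) (Inv arr)"
  proof (rule set_eqI, rule iffI)
    fix q assume "q \<in> Inv (swp j arr)"
    then obtain c d x y where q: "q = (c, d)" "x < y" "arr (tau j x) = d" "arr (tau j y) = c" "c < d"
      by (auto simp: Inv_def swp_tau)
    show "q \<in> insert (arr j, arr (Suc j)) (Inv arr)"
    proof (cases "x = j \<and> y = Suc j")
      case True then show ?thesis using q by (simp add: tau_def)
    next
      case False
      then have "tau j x < tau j y" using tau_mono q by blast
      then show ?thesis using q unfolding Inv_def by blast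
    qed
  next
    fix q assume "q \<in> insert (arr j, arr (Suc j)) (Inv arr)"
    then show "q \<in> Inv (swp j arr)"
    proof
      assume "q = (arr j, arr (Suc j))"
      moreover have "(arr \<circ> tau j) j = arr (Suc j)" "(arr \<circ> tau j) (Suc j) = arr j"
        by (simp_all add: tau_def)
      ultimately show ?thesis using assms unfolding Inv_def swp_tau
        by (metis (mono_tags, lifting) case_prod_conv lessI mem_Collect_eq)
    next
      assume "q \<in> Inv arr"
      then obtain c d x y where q: "q = (c, d)" "x < y" "arr x = d" "arr y = c" "c < d"
        by (auto simp: Inv_def)
      have "\<not> (x = j \<and> y = Suc j)" using q assms by auto
      then have "tau j x < tau j y" using tau_mono q by blast
      then show ?thesis using q unfolding Inv_def swp_tau
        by (intro CollectI, simp, metis tau_tau)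
    qed
  qed
qed

lemma apath_mono: "inj arr \<Longrightarrow> apath arr js \<Longrightarrow> Inv arr \<subseteq> Inv (final_arr arr js)"
proof (induction js arbitrary: arr)
  case Nil then show ?case by simp
next
  case (Cons j js)
  then have "Inv (swp j arr) \<subseteq> Inv (final_arr (swp j arr) js)" using inj_swp by auto
  then show ?case using Inv_swp Cons.prems by auto
qed

lemma good_lt: "good n arr \<Longrightarrow> x < n \<Longrightarrow> arr x < n"
  unfolding good_def by (metis bij_is_inj inj_eq not_less)

lemma good_lt_rev: "good n arr \<Longrightarrow> arr x < n \<Longrightarrow> x < n"
  unfolding good_def by (metis not_less)

lemma Inv_sub: "good n arr \<Longrightarrow> Inv arr \<subseteq> {..<n} \<times> {..<n}"
proof
  fix q assume g: "good n arr" and "q \<in> Inv arr"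
  then obtain c d x y where q: "q = (c, d)" "x < y" "arr x = d" "arr y = c" "c < d"
    by (auto simp: Inv_def)
  have "y < n"
  proof (rule ccontr)
    assume "\<not> y < n"
    then have "arr y = y" using g by (simp add: good_def)
    show False
    proof (cases "x < n")
      case True then have "arr x < n" using good_lt g by blast
      then show False using q \<open>arr y = y\<close> \<open>\<not> y < n\<close> by simp
    next
      case False then have "arr x = x" using g by (simp add: good_def)
      then show False using q \<open>arr y = y\<close> by simp
    qed
  qed
  then have "x < n" using q by simp
  then show "q \<in> {..<n} \<times> {..<n}" using q good_lt[OF g] \<open>y < n\<close> by auto
qed

lemma finite_Inv: "good n arr \<Longrightarrow> finite (Inv arr)"
  using Inv_sub by (meson finite_SigmaI finite_lessThan finite_subset)

lemma apath_card:
  "good n arr \<Longrightarrow> okw n js \<Longrightarrow> apath arr js \<Longrightarrow>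
    card (Inv (final_arr arr js)) = card (Inv arr) + length js"
proof (induction js arbitrary: arr)
  case Nil then show ?case by simp
next
  case (Cons j js)
  have g: "good n (swp j arr)" using Cons good_swp by auto
  have ij: "inj arr" using Cons.prems by (simp add: good_def bij_is_inj)
  have "card (Inv (swp j arr)) = Suc (card (Inv arr))"
    using Inv_swp[OF ij] Cons.prems finite_Inv by auto
  then show ?case using Cons.IH[OF g] Cons.prems by simp
qed

lemma Inv_pos:
  assumes "bij F"
  shows "(a, b) \<in> Inv F \<longleftrightarrow> a < b \<and> inv F b < inv F a"
proof
  assume "(a, b) \<in> Inv F"
  then obtain x y where "x < y" "F x = b" "F y = a" "a < b" by (auto simp: Inv_def)
  then show "a < b \<and> inv F b < inv F a" using assms by (metis bij_inv_eq_iff)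
next
  assume h: "a < b \<and> inv F b < inv F a"
  have "F (inv F b) = b" "F (inv F a) = a" using assms by (simp_all add: surj_f_inv_f bij_is_surj)
  then show "(a, b) \<in> Inv F" using h unfolding Inv_def by blast
qed

lemma find_ascent:
  assumes gA: "good n A" and gF: "good n F" and sub: "Inv A \<subseteq> Inv F"
    and cd: "(c, d) \<in> Inv F" "(c, d) \<notin> Inv A"
  shows "\<exists>k. Suc k < n \<and> A k < A (Suc k) \<and> (A k, A (Suc k)) \<in> Inv F"
proof -
  have bA: "bij A" and bF: "bij F" using gA gF by (auto simp: good_def)
  define P where "P \<delta> \<longleftrightarrow> 0 < \<delta> \<and> (\<exists>x. A x < A (x + \<delta>) \<and> (A x, A (x + \<delta>)) \<in> Inv F)" for \<delta>
  obtain pc where pc: "A pc = c" using bA by (metis bij_pointE)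
  obtain pd where pd: "A pd = d" using bA by (metis bij_pointE)
  have "c < d" using cd by (auto simp: Inv_def)
  have "pc < pd"
  proof (rule ccontr)
    assume "\<not> pc < pd"
    moreover have "pc \<noteq> pd" using pc pd \<open>c < d\<close> by auto
    ultimately have "pd < pc" by simp
    then have "(c, d) \<in> Inv A" using pc pd \<open>c < d\<close> unfolding Inv_def by blast
    then show False using cd by simp
  qed
  have "P (pd - pc)" unfolding P_def using \<open>pc < pd\<close> pc pd cd \<open>c < d\<close>
    by (intro conjI exI[of _ pc]) auto
  define \<delta> where "\<delta> = (LEAST \<delta>. P \<delta>)"
  have P\<delta>: "P \<delta>" unfolding \<delta>_def by (rule LeastI, fact)
  have minP: "\<And>\<delta>'. \<delta>' < \<delta> \<Longrightarrow> \<not> P \<delta>'" unfolding \<delta>_def by (rule not_less_Least)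
  obtain x where x: "0 < \<delta>" "A x < A (x + \<delta>)" "(A x, A (x + \<delta>)) \<in> Inv F"
    using P\<delta> unfolding P_def by blast
  show ?thesis
  proof (cases "\<delta> = 1")
    case True
    have "(A x, A (Suc x)) \<in> {..<n} \<times> {..<n}" using x True Inv_sub[OF gF] by auto
    then have "Suc x < n" using good_lt_rev[OF gA] by auto
    then show ?thesis using x True by auto
  next
    case False
    define y where "y = x + \<delta>"
    define z where "z = Suc x"
    have xz: "x < z" "z < y" using x False unfolding y_def z_def by auto
    define a b c' where "a = A x" "b = A y" "c' = A z"
    have ab: "a < b" "inv F b < inv F a" using x Inv_pos[OF bF] unfolding a_b_c'_def y_def by auto
    have ne: "c' \<noteq> a" "c' \<noteq> b" using xz bA unfolding a_b_c'_def by (auto simp: bij_def inj_eq)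
    then have ne2: "inv F c' \<noteq> inv F a" "inv F c' \<noteq> inv F b" using bF
      by (metis bij_inv_eq_iff)+
    show ?thesis
    proof (cases "inv F a < inv F c'")
      case True
      then have bc: "inv F b < inv F c'" using ab by simp
      show ?thesis
      proof (cases "c' < b")
        case True
        then have "(c', b) \<in> Inv F" using bc Inv_pos[OF bF] by simp
        then have "P (y - z)" unfolding P_def using xz True unfolding a_b_c'_def
          by (intro conjI exI[of _ z]) auto
        moreover have "y - z < \<delta>" using xz unfolding y_def by simp
        ultimately show ?thesis using minP by blast
      next
        case False
        then have "b < c'" using ne by simp
        then have "(b, c') \<in> Inv A" unfolding Inv_def a_b_c'_def using xz by blast
        then have "(b, c') \<in> Inv F" using sub by blast
        then show ?thesis using bc Inv_pos[OF bF] by simp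
      qed
    next
      case False
      then have ca: "inv F c' < inv F a" using ne2 by simp
      show ?thesis
      proof (cases "a < c'")
        case True
        then have "(a, c') \<in> Inv F" using ca Inv_pos[OF bF] by simp
        then have "P 1" unfolding P_def using True unfolding a_b_c'_def z_def
          by (intro conjI exI[of _ x]) auto
        then show ?thesis using minP False x \<open>\<delta> \<noteq> 1\<close>
          by (metis less_one nat_neq_iff)
      next
        case False
        then have "c' < a" using ne by simp
        then have "(c', a) \<in> Inv A" unfolding Inv_def a_b_c'_def using xz by blast
        then have "(c', a) \<in> Inv F" using sub by blast
        then show ?thesis using ca Inv_pos[OF bF] by simp
      qed
    qed
  qed
qed

lemma strict_mono_surj_id:
  fixes h :: "nat \<Rightarrow> nat"
  assumes "strict_mono h" "surj h"
  shows "h n = n"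
proof (induction n rule: less_induct)
  case (less n)
  obtain m where m: "n = h m" using assms(2) by (metis surjD)
  show ?case
  proof (cases "m < n")
    case True then have "h m = m" using less by simp
    then show ?thesis using m True by simp
  next
    case False
    then have "h n \<le> h m" using assms(1) by (simp add: strict_mono_less_eq)
    moreover have "n \<le> h n" using assms(1) by (simp add: strict_mono_imp_increasing)
    ultimately show ?thesis using m by simp
  qed
qed

lemma Inv_eq_imp_eq:
  assumes gA: "good n A" and gF: "good n F" and eq: "Inv A = Inv F"
  shows "A = F"
proof -
  have bA: "bij A" and bF: "bij F" using gA gF by (auto simp: good_def)
  define h where "h = inv F \<circ> A"
  have sm: "strict_mono h"
  proof (rule strict_monoI)
    fix x y :: nat assume "x < y"
    have neq: "A x \<noteq> A y" using bA \<open>x < y\<close> by (metis bij_def inj_eq less_irrefl)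
    show "h x < h y"
    proof (cases "A x < A y")
      case True
      have "(A x, A y) \<notin> Inv A"
      proof
        assume "(A x, A y) \<in> Inv A"
        then obtain x' y' where "x' < y'" "A x' = A y" "A y' = A x" by (auto simp: Inv_def)
        then show False using bA \<open>x < y\<close> by (metis bij_def inj_eq less_asym)
      qed
      then have "\<not> inv F (A y) < inv F (A x)" using eq Inv_pos[OF bF] True by auto
      moreover have "inv F (A y) \<noteq> inv F (A x)" using neq bF by (metis bij_inv_eq_iff)
      ultimately show ?thesis unfolding h_def by simp
    next
      case False
      then have "A y < A x" using neq by simp
      then have "(A y, A x) \<in> Inv A" unfolding Inv_def using \<open>x < y\<close> by blast
      then show ?thesis using eq Inv_pos[OF bF] unfolding h_def by auto
    qed
  qed
  have "bij h" unfolding h_def using bA bF by (simp add: bij_comp bij_imp_bij_inv)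
  then have "\<And>x. h x = x" using sm strict_mono_surj_id by (metis bij_is_surj)
  then show ?thesis unfolding h_def using bF by (metis bij_inv_eq_iff comp_apply ext)
qed

lemma char_if:
  assumes "good n A" "good n F" "Inv A \<subseteq> Inv F"
  shows "\<exists>js. okw n js \<and> apath A js \<and> final_arr A js = F"
  using assms
proof (induction "card (Inv F - Inv A)" arbitrary: A rule: less_induct)
  case less
  show ?case
  proof (cases "Inv A = Inv F")
    case True
    then have "A = F" using Inv_eq_imp_eq less.prems by blast
    then show ?thesis by (intro exI[of _ "[]"]) simp
  next
    case False
    then obtain c d where cd: "(c, d) \<in> Inv F" "(c, d) \<notin> Inv A" using less.prems by auto
    obtain k where k: "Suc k < n" "A k < A (Suc k)" "(A k, A (Suc k)) \<in> Inv F"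
      using find_ascent[OF less.prems cd] by blast
    have ij: "inj A" using less.prems by (simp add: good_def bij_is_inj)
    have I: "Inv (swp k A) = insert (A k, A (Suc k)) (Inv A)" "(A k, A (Suc k)) \<notin> Inv A"
      using Inv_swp[OF ij k(2)] by auto
    have g': "good n (swp k A)" using good_swp less.prems k by blast
    have sub': "Inv (swp k A) \<subseteq> Inv F" using I k less.prems by auto
    have "card (Inv F - Inv (swp k A)) < card (Inv F - Inv A)"
      apply (rule psubset_card_mono)
      using finite_Inv[OF less.prems(2)] I k by auto
    then obtain js where "okw n js" "apath (swp k A) js" "final_arr (swp k A) js = F"
      using less.hyps g' less.prems(2) sub' by blast
    then show ?thesis using k by (intro exI[of _ "k # js"]) simp
  qed
qed

lemma exchange:
  assumes "good n A" "okw n js" "apath A js" "Suc k < n" "A k < A (Suc k)"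
    "(A k, A (Suc k)) \<in> Inv (final_arr A js)"
  shows "\<exists>js'. okw n js' \<and> apath (swp k A) js' \<and> final_arr (swp k A) js' = final_arr A js"
proof -
  have ij: "inj A" using assms by (simp add: good_def bij_is_inj)
  show ?thesis
    apply (rule char_if)
    using good_swp assms good_final apath_mono[OF ij assms(3)] Inv_swp[OF ij assms(5)] by auto
qed



lemmas beq_trans'[trans] = beq_trans

lemma beq_app: "beq n u u' \<Longrightarrow> beq n v v' \<Longrightarrow> beq n (u @ v) (u' @ v')"
proof -
  assume a: "beq n u u'" "beq n v v'"
  have "beq n ([] @ u @ v) ([] @ u' @ v)" by (rule beq_ctx[OF a(1)])
  moreover have "beq n (u' @ v @ []) (u' @ v' @ [])" by (rule beq_ctx[OF a(2)])
  ultimately show ?thesis by (auto intro: beq_trans)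
qed

lemma pos_word_app[simp]: "pos_word (xs @ ys) = pos_word xs @ pos_word ys"
  by (simp add: pos_word_def)
lemma pos_word_simps[simp]: "pos_word [] = []" "pos_word (x # xs) = (x, True) # pos_word xs"
  by (simp_all add: pos_word_def)

lemma len_eq:
  assumes "good n A" "okw n js1" "okw n js2" "apath A js1" "apath A js2"
    "final_arr A js1 = final_arr A js2"
  shows "length js1 = length js2"
  using apath_card[OF assms(1,2,4)] apath_card[OF assms(1,3,5)] assms(6) by simp

lemma pair_in_final:
  assumes "good n A" "apath A (i # r)"
  shows "(A i, A (Suc i)) \<in> Inv (final_arr A (i # r))"
proof -
  have ij: "inj A" using assms by (simp add: good_def bij_is_inj)
  have "(A i, A (Suc i)) \<in> Inv (swp i A)" using Inv_swp[OF ij] assms by auto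
  moreover have "Inv (swp i A) \<subseteq> Inv (final_arr (swp i A) r)"
    using apath_mono[OF inj_swp[OF ij]] assms by auto
  ultimately show ?thesis by auto
qed

lemma Inv_trans:
  assumes "good n F" "(a, b) \<in> Inv F" "(b, c) \<in> Inv F"
  shows "(a, c) \<in> Inv F"
  using assms Inv_pos[of F] by (auto simp: good_def)

lemma swp_braid: "swp (Suc i) (swp i (swp (Suc i) A)) = swp i (swp (Suc i) (swp i A))"
  by (rule ext) (simp add: swp_def)

lemma swp_comm: "i + 2 \<le> k \<or> k + 2 \<le> i \<Longrightarrow> swp k (swp i A) = swp i (swp k A)"
  by (rule ext) (auto simp: swp_def)

type_synonym ihyp = "nat \<Rightarrow> nat \<Rightarrow> bool"

definition MS :: "nat \<Rightarrow> nat \<Rightarrow> bool" where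
  "MS n L \<longleftrightarrow> (\<forall>A js1 js2. length js1 = L \<longrightarrow> good n A \<longrightarrow> okw n js1 \<longrightarrow> okw n js2 \<longrightarrow>
     apath A js1 \<longrightarrow> apath A js2 \<longrightarrow> final_arr A js1 = final_arr A js2 \<longrightarrow>
     beq n (pos_word (rev js1)) (pos_word (rev js2)))"

lemma adj:
  assumes IH: "MS n (length r1)"
    and gA: "good n A" and ok1: "okw n (i # r1)" and ok2: "okw n (Suc i # r2)"
    and p1: "apath A (i # r1)" and p2: "apath A (Suc i # r2)"
    and fe: "final_arr A (i # r1) = final_arr A (Suc i # r2)"
  shows "beq n (pos_word (rev (i # r1))) (pos_word (rev (Suc i # r2)))"
proof -
  define F where "F = final_arr A (i # r1)"
  have gF: "good n F" unfolding F_def using good_final gA ok1 by blast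
  have ab: "A i < A (Suc i)" and bc: "A (Suc i) < A (Suc (Suc i))" using p1 p2 by auto
  have Iab: "(A i, A (Suc i)) \<in> Inv F" unfolding F_def by (rule pair_in_final[OF gA p1])
  have Ibc: "(A (Suc i), A (Suc (Suc i))) \<in> Inv F" unfolding F_def fe by (rule pair_in_final[OF gA p2])
  have Iac: "(A i, A (Suc (Suc i))) \<in> Inv F" using Inv_trans[OF gF Iab Ibc] .
  have n2: "Suc (Suc i) < n" using ok2 by simp
  define B where "B = swp i A"
  have gB: "good n B" unfolding B_def using good_swp gA n2 by simp
  have pB: "apath B r1" "okw n r1" "final_arr B r1 = F" using p1 ok1 unfolding B_def F_def by auto
  have "B (Suc i) < B (Suc (Suc i))" "(B (Suc i), B (Suc (Suc i))) \<in> Inv F"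
    using ab bc Iac unfolding B_def by (auto simp: swp_def)
  then obtain r4 where r4: "okw n r4" "apath (swp (Suc i) B) r4" "final_arr (swp (Suc i) B) r4 = F"
    using exchange[OF gB pB(2,1) n2] pB(3) by metis
  define C where "C = swp (Suc i) B"
  have gC: "good n C" unfolding C_def using good_swp gB n2 by simp
  have "C i < C (Suc i)" "(C i, C (Suc i)) \<in> Inv F"
    using ab bc Ibc unfolding C_def B_def by (auto simp: swp_def)
  then obtain r3 where r3: "okw n r3" "apath (swp i C) r3" "final_arr (swp i C) r3 = F"
    using exchange[OF gC r4(1) r4(2)[folded C_def]] n2 r4(3)[folded C_def] by (metis Suc_lessD)
  define D where "D = swp i C"
  define A' where "A' = swp (Suc i) A"
  define B' where "B' = swp i A'"
  have DD: "swp (Suc i) B' = D" unfolding B'_def A'_def D_def C_def B_def by (rule swp_braid)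
  have q1: "apath B (Suc i # i # r3)" using ab bc r3 unfolding B_def C_def D_def
    by (simp add: swp_def)
  have q2: "apath A' (i # Suc i # r3)" using ab bc r3 DD unfolding A'_def B'_def C_def D_def
    by (simp add: swp_def)
  have f1: "final_arr B r1 = final_arr B (Suc i # i # r3)" using pB r3 unfolding C_def by simp
  have f2: "final_arr A' r2 = final_arr A' (i # Suc i # r3)"
    using r3 DD fe unfolding A'_def B'_def F_def D_def C_def by simp
  have len: "length r2 = length r1" using len_eq[OF gA ok1 ok2 p1 p2 fe] by simp
  have gA': "good n A'" unfolding A'_def using good_swp gA n2 by simp
  have e1: "beq n (pos_word (rev r1)) (pos_word (rev r3) @ [(i, True), (Suc i, True)])"
    using IH[unfolded MS_def, rule_format, of r1 B "Suc i # i # r3"] gB pB q1 f1 r3 n2 by simp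
  have e2: "beq n (pos_word (rev r2)) (pos_word (rev r3) @ [(Suc i, True), (i, True)])"
    using IH[unfolded MS_def, rule_format, of r2 A' "i # Suc i # r3"] gA' p2 ok2 q2 f2 r3 n2 len
    unfolding A'_def by simp
  have br: "beq n [(i, True), (Suc i, True), (i, True)] [(Suc i, True), (i, True), (Suc i, True)]"
    using n2 by (intro beq_braid) simp
  have "beq n (pos_word (rev (i # r1))) (pos_word (rev r3) @ [(i, True), (Suc i, True), (i, True)])"
    using beq_app[OF e1 beq_refl[of n "[(i, True)]"]] by simp
  also have "beq n ... (pos_word (rev r3) @ [(Suc i, True), (i, True), (Suc i, True)])"
    by (rule beq_app[OF beq_refl br])
  also have "beq n ... (pos_word (rev (Suc i # r2)))"
    using beq_sym[OF beq_app[OF e2 beq_refl[of n "[(Suc i, True)]"]]] by simp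
  finally show ?thesis .
qed

lemma matsumoto_MS: "MS n L"
proof (induction L rule: less_induct)
  case (less L)
  show ?case unfolding MS_def
  proof (intro allI impI)
    fix A js1 js2
    assume len1: "length js1 = L" and gA: "good n A" and ok1: "okw n js1" and ok2: "okw n js2"
      and p1: "apath A js1" and p2: "apath A js2" and fe: "final_arr A js1 = final_arr A js2"
    have len: "length js1 = length js2" using len_eq[OF gA ok1 ok2 p1 p2 fe] .
    show "beq n (pos_word (rev js1)) (pos_word (rev js2))"
    proof (cases js1)
      case Nil then show ?thesis using len by (simp add: beq_refl)
    next
      case (Cons i r1)
      then obtain k r2 where js2: "js2 = k # r2" using len by (cases js2) auto
      have IH: "MS n (length r1)" using less len1 Cons by simp
      have ij: "inj A" using gA by (simp add: good_def bij_is_inj)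
      show ?thesis
      proof (cases "i = k")
        case True
        have "beq n (pos_word (rev r1)) (pos_word (rev r2))"
          using IH[unfolded MS_def, rule_format, of r1 "swp k A" r2] good_swp[OF gA] p1 p2 ok1 ok2 fe len
          unfolding Cons js2 True by simp
        then show ?thesis unfolding Cons js2 True by (simp add: beq_app beq_refl)
      next
        case False
        show ?thesis
        proof (cases "k = Suc i \<or> i = Suc k")
          case True
          then show ?thesis
          proof
            assume "k = Suc i"
            then show ?thesis using adj[OF IH gA] ok1 ok2 p1 p2 fe unfolding Cons js2 by simp
          next
            assume ik: "i = Suc k"
            have "length r2 = length r1" using len Cons js2 by simp
            then have "beq n (pos_word (rev (k # r2))) (pos_word (rev (Suc k # r1)))"
              using adj[of n r2 A k r1] IH gA ok1 ok2 p1 p2 fe unfolding Cons js2 ik by simp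
            then show ?thesis unfolding Cons js2 ik by (rule beq_sym)
          qed
        next
          case False
          then have far: "i + 2 \<le> k \<or> k + 2 \<le> i" using \<open>i \<noteq> k\<close> by arith
          define F where "F = final_arr A js1"
          define B where "B = swp i A"
          have si: "Suc i < n" and sk: "Suc k < n" using ok1 ok2 Cons js2 by auto
          have gB: "good n B" unfolding B_def using good_swp gA si by simp
          have pB: "apath B r1" "okw n r1" "final_arr B r1 = F"
            using p1 ok1 unfolding B_def F_def Cons by auto
          have Ik: "(A k, A (Suc k)) \<in> Inv F" unfolding F_def fe js2
            by (rule pair_in_final[OF gA p2[unfolded js2]])
          have "B k < B (Suc k)" "(B k, B (Suc k)) \<in> Inv F"
            using far Ik p2 unfolding B_def js2 by (auto simp: swp_def)
          then obtain r3 where r3: "okw n r3" "apath (swp k B) r3" "final_arr (swp k B) r3 = F"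
            using exchange[OF gB pB(2,1) sk] pB(3) by metis
          have cm: "swp k B = swp i (swp k A)" unfolding B_def by (rule swp_comm[OF far])
          have q1: "apath B (k # r3)" using r3 \<open>B k < B (Suc k)\<close> by simp
          have q2: "apath (swp k A) (i # r3)" using r3 cm far p1 unfolding Cons
            by (auto simp: swp_def)
          have f1: "final_arr B r1 = final_arr B (k # r3)" using pB r3 by simp
          have f2: "final_arr (swp k A) r2 = final_arr (swp k A) (i # r3)"
            using r3 cm fe unfolding F_def Cons js2 by simp
          have e1: "beq n (pos_word (rev r1)) (pos_word (rev r3) @ [(k, True)])"
            using IH[unfolded MS_def, rule_format, of r1 B "k # r3"] gB pB q1 f1 r3 sk by simp
          have e2: "beq n (pos_word (rev r2)) (pos_word (rev r3) @ [(i, True)])"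
            using IH[unfolded MS_def, rule_format, of r2 "swp k A" "i # r3"] good_swp[OF gA sk] p2 ok2 q2 f2 r3 si len
            unfolding js2 Cons by simp
          have cmw: "beq n [(k, True), (i, True)] [(i, True), (k, True)]"
            using far si sk by (metis beq_comm beq_sym)
          have "beq n (pos_word (rev js1)) (pos_word (rev r3) @ [(k, True), (i, True)])"
            using beq_app[OF e1 beq_refl[of n "[(i, True)]"]] unfolding Cons by simp
          also have "beq n ... (pos_word (rev r3) @ [(i, True), (k, True)])"
            by (rule beq_app[OF beq_refl cmw])
          also have "beq n ... (pos_word (rev js2))"
            using beq_sym[OF beq_app[OF e2 beq_refl[of n "[(k, True)]"]]] unfolding js2 by simp
          finally show ?thesis .
        qed
      qed
    qed
  qed
qed

lemma matsumoto:
  assumes "good n A" "okw n js1" "okw n js2" "apath A js1" "apath A js2"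
    "final_arr A js1 = final_arr A js2"
  shows "beq n (pos_word (rev js1)) (pos_word (rev js2))"
  using matsumoto_MS[of n "length js1"] assms unfolding MS_def by blast



lemma final_relab: "final_arr (f \<circ> A) js = f \<circ> final_arr A js"
  by (induction js arbitrary: A) (auto simp: swp_tau comp_assoc)

lemma tau_mono2: "x < y \<Longrightarrow> \<not> (x = a \<and> y = Suc a) \<Longrightarrow> tau a x < tau a y"
  by (auto simp: tau_def)

lemma relab:
  assumes "inj A" "apath A js" "(a, Suc a) \<notin> Inv (final_arr A js)"
  shows "apath (tau a \<circ> A) js"
  using assms
proof (induction js arbitrary: A)
  case Nil then show ?case by simp
next
  case (Cons j js)
  have ij: "inj (swp j A)" using inj_swp Cons.prems by blast
  have asc: "A j < A (Suc j)" using Cons.prems by simp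
  have sub: "Inv (swp j A) \<subseteq> Inv (final_arr (swp j A) js)"
    using apath_mono[OF ij] Cons.prems by simp
  have "(A j, A (Suc j)) \<in> Inv (swp j A)" using Inv_swp[OF Cons.prems(1) asc] by simp
  then have "\<not> (A j = a \<and> A (Suc j) = Suc a)" using sub Cons.prems(3) by auto
  then have "tau a (A j) < tau a (A (Suc j))" using tau_mono2 asc by blast
  moreover have "apath (tau a \<circ> swp j A) js" using Cons.IH[OF ij] Cons.prems by (auto simp: comp_def)
  moreover have "swp j (tau a \<circ> A) = tau a \<circ> swp j A" by (simp add: swp_tau comp_assoc)
  ultimately show ?case by (simp add: comp_def)
qed

lemma apath_crossings: "(\<forall>(a, b) \<in> set (crossings arr js). a < b) \<Longrightarrow> apath arr js"
  by (induction js arbitrary: arr) auto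

lemma Inv_id: "Inv id = {}" by (auto simp: Inv_def)

lemma swp_swp[simp]: "swp a (swp a f) = f"
  by (rule ext) (simp add: swp_def)

lemma ppb_facts:
  assumes "ppb_word N perm w"
  shows "okw N (rev w)" "apath id (rev w)" "good N (final_arr id (rev w))"
    "\<And>i. i < N \<Longrightarrow> final_arr id (rev w) (perm i) = i"
  using assms good_final[OF good_id] apath_crossings unfolding ppb_word_def okw_def by auto

lemma perm_facts:
  assumes g: "good N F" and h: "\<And>i. i < N \<Longrightarrow> F (perm i) = i"
  shows "\<forall>i<N. perm i < N" "perm ` {..<N} = {..<N}" "\<forall>i<N. inv F i = perm i"
proof -
  have lt: "\<And>i. i < N \<Longrightarrow> perm i < N"
  proof (rule ccontr)
    fix i assume "i < N" "\<not> perm i < N"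
    then have "F (perm i) = perm i" using g by (simp add: good_def)
    then show False using h \<open>i < N\<close> \<open>\<not> perm i < N\<close> by fastforce
  qed
  have "inj_on perm {..<N}" by (rule inj_onI) (metis h lessThan_iff)
  then show "perm ` {..<N} = {..<N}" using lt by (intro endo_inj_surj) auto
  show "\<forall>i<N. perm i < N" using lt by simp
  show "\<forall>i<N. inv F i = perm i"
    using g h by (metis bij_inv_eq_iff good_def)
qed

lemma braid_cases:
  assumes pp: "ppb_word N pplus wp" and pm: "ppb_word N pminus wm" and aN: "Suc a < N"
    and hyp: "\<And>k. k < N \<Longrightarrow> pplus k = tau a (pminus (tau a k))"
    and asc: "pminus a < pminus (Suc a)"
    and q: "q1 < N" "q2 < N" "pminus q1 = a" "pminus q2 = Suc a"
  shows "q2 < q1 \<Longrightarrow> braid_conj N (pos_word wp) (pos_word wm)"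
    and "q1 < q2 \<Longrightarrow> pminus a \<noteq> a \<Longrightarrow> braid_revconj N (pos_word wp) (pos_word wm)"
proof -
  define Fm where "Fm = final_arr id (rev wm)"
  define Fp where "Fp = final_arr id (rev wp)"
  note m = ppb_facts[OF pm, folded Fm_def]
  note p = ppb_facts[OF pp, folded Fp_def]
  note mf = perm_facts[OF m(3) m(4)]
  have bm: "bij Fm" using m(3) by (simp add: good_def)
  have tauN: "\<And>x. N \<le> x \<Longrightarrow> tau a x = x" using aN by (auto simp: tau_def)
  have tauN2: "\<And>x. x < N \<Longrightarrow> tau a x < N" using aN by (auto simp: tau_def)
  have comm: "Fp \<circ> tau a = tau a \<circ> Fm"
  proof
    fix x
    show "(Fp \<circ> tau a) x = (tau a \<circ> Fm) x"
    proof (cases "x < N")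
      case False then show ?thesis using p(3) m(3) tauN by (simp add: good_def)
    next
      case True
      then obtain y where y: "y < N" "x = pminus y" using mf(2) by (metis imageE lessThan_iff)
      have "pplus (tau a y) = tau a x" using hyp[OF tauN2[OF y(1)]] y by simp
      then have "Fp (tau a x) = tau a y" using p(4)[OF tauN2[OF y(1)]] by simp
      moreover have "Fm x = y" using m(4) y by simp
      ultimately show ?thesis by simp
    qed
  qed
  have Fp_eq: "Fp = tau a \<circ> Fm \<circ> tau a"
  proof (rule ext)
    fix x
    have "Fp x = Fp (tau a (tau a x))" by simp
    also have "... = tau a (Fm (tau a x))" using fun_cong[OF comm, of "tau a x"] by simp
    finally show "Fp x = (tau a \<circ> Fm \<circ> tau a) x" by simp
  qed
  have Fq: "Fm a = q1" "Fm (Suc a) = q2" using m(4)[OF q(1)] m(4)[OF q(2)] q(3,4) by simp_all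
  have notI: "(a, Suc a) \<notin> Inv Fm"
    using Inv_pos[OF bm, of a "Suc a"] mf(3) aN asc by simp
  have gA: "good N id" by (rule good_id)
  {
    assume "q2 < q1"
    define G where "G = swp a Fm"
    have gG: "good N G" unfolding G_def using good_swp m(3) aN by blast
    have Gasc: "G a < G (Suc a)" using Fq \<open>q2 < q1\<close> unfolding G_def by (simp add: swp_def)
    have bG: "inj G" using gG by (simp add: good_def bij_is_inj)
    have FG: "swp a G = Fm" unfolding G_def by simp
    have IG: "Inv Fm = insert (G a, G (Suc a)) (Inv G)" using Inv_swp[OF bG Gasc] FG by simp
    obtain js' where js': "okw N js'" "apath id js'" "final_arr id js' = G"
      using char_if[OF gA gG] Inv_id by auto
    have path1: "apath id (js' @ [a])" "final_arr id (js' @ [a]) = Fm"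
      using js' Gasc FG by (simp_all add: apath_append final_append)
    have e1: "beq N (pos_word wm) ((a, True) # pos_word (rev js'))"
      using matsumoto[OF gA m(1) _ m(2) path1(1)] path1(2) js' aN unfolding Fm_def
      by (simp add: pos_word_def)
    have ra: "apath (tau a \<circ> id) js'"
      using relab[of id js' a] js' notI IG by auto
    have sw: "swp a id = tau a \<circ> id" by (simp add: swp_tau)
    have path2: "apath id (a # js')" "final_arr id (a # js') = Fp"
      using ra sw final_relab[of "tau a" id js'] js' Fp_eq unfolding G_def
      by (simp_all add: swp_tau comp_assoc)
    have e2: "beq N (pos_word wp) (pos_word (rev js') @ [(a, True)])"
      using matsumoto[OF gA p(1) _ p(2) path2(1)] path2(2) js' aN unfolding Fp_def by simp
    have "beq N (pos_word wm) ([(a, True)] @ pos_word (rev js') @ [])"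
      using e1 by simp
    also have "beq N ... ([(a, True)] @ pos_word (rev js') @ [(a, True), (a, \<not> True)])"
      by (rule beq_app[OF beq_refl beq_app[OF beq_refl beq_sym[OF beq_cancel[OF aN]]]])
    also have "beq N ... ([(a, True)] @ pos_word wp @ [(a, False)])"
      using beq_app[OF beq_refl[of N "[(a, True)]"] beq_app[OF beq_sym[OF e2] beq_refl[of N "[(a, False)]"]]]
      by simp
    finally have "beq N (pos_word wm) (binv [(a, False)] @ pos_word wp @ [(a, False)])"
      by (simp add: binv_def)
    moreover have "valid_word N [(a, False)]" using aN by (simp add: valid_word_def)
    ultimately show "braid_conj N (pos_word wp) (pos_word wm)"
      unfolding braid_conj_def by blast
  }
  {
    assume "q1 < q2" "pminus a \<noteq> a"
    have ra: "apath (tau a \<circ> id) (rev wm)"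
      using relab[of id "rev wm" a] m notI unfolding Fm_def by auto
    have fa: "final_arr (tau a) (rev wm) = tau a \<circ> Fm"
      using final_relab[of "tau a" id "rev wm"] unfolding Fm_def by simp
    have "Fm a \<noteq> a"
    proof
      assume "Fm a = a"
      then have "inv Fm a = a" using bm by (metis bij_is_inj inv_f_f)
      moreover have "inv Fm a = pminus a" using mf(3) aN by simp
      ultimately show False using \<open>pminus a \<noteq> a\<close> by simp
    qed
    then have "tau a (Fm a) < tau a (Fm (Suc a))"
      using tau_mono2[of "Fm a" "Fm (Suc a)" a] Fq \<open>q1 < q2\<close> by simp
    then have path: "apath id (a # rev wm @ [a])" "final_arr id (a # rev wm @ [a]) = Fp"
      using ra fa Fp_eq by (simp_all add: apath_append final_append swp_tau comp_assoc)
    have ok: "okw N (a # rev wm @ [a])" using m(1) aN by simp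
    have e: "beq N (pos_word wp) ([(a, True)] @ pos_word wm @ [(a, True)])"
      using matsumoto[OF gA p(1) ok p(2) path(1)] path(2) unfolding Fp_def by simp
    have "beq N (pos_word wm @ [(a, True)]) ([] @ pos_word wm @ [(a, True)])" by (simp add: beq_refl)
    also have "beq N ... ([(a, False), (a, \<not> False)] @ pos_word wm @ [(a, True)])"
      by (rule beq_app[OF beq_sym[OF beq_cancel[OF aN]] beq_refl])
    also have "beq N ... ([(a, False)] @ pos_word wp)"
      using beq_app[OF beq_refl[of N "[(a, False)]"] beq_sym[OF e]] by simp
    finally have "beq N (pos_word wm @ [(a, True)]) (binv [(a, True)] @ pos_word wp)"
      by (simp add: binv_def)
    moreover have "valid_word N [(a, True)]" using aN by (simp add: valid_word_def)
    ultimately show "braid_revconj N (pos_word wp) (pos_word wm)"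
      unfolding braid_revconj_def by blast
  }
qed



context
  fixes p m :: nat and v :: "nat \<Rightarrow> nat"
  assumes cyc: "cyclic_perm p v" and mp: "m < p"
begin

lemma v_lt: "k < p \<Longrightarrow> v k < p"
  using cyc unfolding cyclic_perm_def bij_betw_def by auto

lemma v_inj: "inj_on v {..<p}"
  using cyc unfolding cyclic_perm_def bij_betw_def by auto

lemma orb_0[simp]: "orb v m 0 = m" by (simp add: orb_def)
lemma orb_Suc: "orb v m (Suc i) = v (orb v m i)" by (simp add: orb_def)

lemma orb_lt: "orb v m i < p"
  by (induction i) (auto simp: orb_Suc mp v_lt)

lemma orb_shift:
  assumes "orb v m i = orb v m k" "i \<le> s"
  shows "orb v m (s + (k - i)) = orb v m s"
  using assms(2)
proof (induction s rule: nat_induct_at_least)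
  case base
  then show ?case using assms by (cases "i \<le> k") auto
next
  case (Suc s)
  then show ?case by (simp add: orb_Suc)
qed

lemma orb_distinct:
  assumes "i < k" "k < p"
  shows "orb v m i \<noteq> orb v m k"
proof
  assume eq: "orb v m i = orb v m k"
  have all: "orb v m t \<in> orb v m ` {..<k}" for t
  proof (induction t rule: less_induct)
    case (less t)
    show ?case
    proof (cases "t < k")
      case True then show ?thesis by simp
    next
      case False
      then have "t = (t - (k - i)) + (k - i)" "i \<le> t - (k - i)" using assms by auto
      then have "orb v m t = orb v m (t - (k - i))" using orb_shift[OF eq] by metis
      moreover have "t - (k - i) < t" using assms False by auto
      ultimately show ?thesis using less by simp
    qed
  qed
  have "{..<p} \<subseteq> orb v m ` {..<k}"
  proof
    fix b assume "b \<in> {..<p}"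
    then obtain t where "(v ^^ t) m = b" using cyc mp unfolding cyclic_perm_def by auto
    then show "b \<in> orb v m ` {..<k}" using all[of t] by (simp add: orb_def)
  qed
  then have "card {..<p} \<le> card (orb v m ` {..<k})" by (intro card_mono) auto
  also have "... \<le> k" using card_image_le[of "{..<k}"] by simp
  finally show False using assms by simp
qed

lemma orb_ne_m: "1 \<le> i \<Longrightarrow> i < p \<Longrightarrow> orb v m i \<noteq> m"
  using orb_distinct[of 0 i] by simp

lemma orb_inj: "i < p \<Longrightarrow> k < p \<Longrightarrow> orb v m i = orb v m k \<Longrightarrow> i = k"
  using orb_distinct by (metis nat_neq_iff)

lemma orb_p: "orb v m p = m"
proof -
  have inj: "inj_on (orb v m) {..<p}" by (rule inj_onI) (auto intro: orb_inj)
  have "orb v m ` {..<p} \<subseteq> {..<p}" using orb_lt by auto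
  moreover have "card (orb v m ` {..<p}) = card {..<p}" using card_image[OF inj] by simp
  ultimately have im: "orb v m ` {..<p} = {..<p}" by (simp add: card_subset_eq)
  obtain s where s: "s < p" "orb v m s = orb v m p" using orb_lt[of p] im by (metis imageE lessThan_iff)
  show ?thesis
  proof (cases s)
    case 0 then show ?thesis using s by simp
  next
    case (Suc s')
    have p1: "p = Suc (p - 1)" using mp by simp
    have "v (orb v m s') = v (orb v m (p - 1))" using s Suc p1 by (metis orb_Suc)
    then have "orb v m s' = orb v m (p - 1)" using v_inj orb_lt by (meson inj_onD lessThan_iff)
    then have "s' = p - 1" using orb_inj orb_lt Suc s mp by simp
    then show ?thesis using s Suc by simp
  qed
qed

lemma v_q: "v (orb v m (p - 1)) = m"
  using orb_p orb_Suc mp by (metis Suc_diff_1 gr_implies_not0 not_gr0)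

end



lemma cmp_lt:
  fixes s t :: real
  assumes "\<bar>s\<bar> < 1/2" "\<bar>t\<bar> < 1/2"
  shows "(real a + s < real b + t) \<longleftrightarrow> (a < b \<or> (a = b \<and> s < t))"
proof (cases "a < b")
  case True
  then have "real a + 1 \<le> real b" by (metis Suc_leI of_nat_Suc of_nat_le_iff add.commute)
  then show ?thesis using assms True by auto
next
  case False
  show ?thesis
  proof (cases "a = b")
    case True then show ?thesis by auto
  next
    case False
    then have "b < a" using \<open>\<not> a < b\<close> by simp
    then have "real b + 1 \<le> real a" by (metis Suc_leI of_nat_Suc of_nat_le_iff add.commute)
    then show ?thesis using assms \<open>\<not> a < b\<close> by auto
  qed
qed

lemma cmp_eq:
  fixes s t :: real
  assumes "\<bar>s\<bar> < 1/2" "\<bar>t\<bar> < 1/2"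
  shows "(real a + s = real b + t) \<longleftrightarrow> (a = b \<and> s = t)"
proof
  assume eq: "real a + s = real b + t"
  then have "\<not> real a + s < real b + t" "\<not> real b + t < real a + s" by simp_all
  then have "\<not> a < b" "\<not> b < a" using cmp_lt[OF assms, of a b] cmp_lt[OF assms(2,1), of b a] by auto
  then have "a = b" by simp
  then show "a = b \<and> s = t" using eq by simp
qed simp

definition Cset :: "nat \<Rightarrow> (nat \<Rightarrow> nat) \<Rightarrow> nat \<Rightarrow> nat \<Rightarrow> real \<Rightarrow> real set" where
  "Cset p v m j eps = real ` {..<p} \<union> rpt v m eps ` {1..j}"

definition offs :: "(nat \<Rightarrow> nat) \<Rightarrow> nat \<Rightarrow> real \<Rightarrow> nat \<Rightarrow> real" where
  "offs v m eps i = (if even (rho v m i) then - eps else eps)"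

locale sett =
  fixes p m j :: nat and v :: "nat \<Rightarrow> nat" and eps :: real
  assumes cyc: "cyclic_perm p v" and mp: "m < p" and j1: "1 \<le> j" and jp: "j < p"
    and eps0: "0 < eps" and eps1: "eps < 1/4"

context sett
begin

abbreviation "C \<equiv> Cset p v m j eps"
abbreviation "rp \<equiv> rpt v m eps"
abbreviation "rs \<equiv> rsig m eps"
abbreviation "S \<equiv> Sset p v m j eps"
abbreviation "ox \<equiv> orb v m"

lemma rp_eq: "rp i = real (ox i) + offs v m eps i"
  by (simp add: rpt_def offs_def)

lemma offs_abs: "\<bar>offs v m eps i\<bar> = eps"
  using eps0 by (simp add: offs_def)

lemma offs_small: "\<bar>offs v m eps i\<bar> < 1/2" using offs_abs eps1 by simp

lemma rs_eq: "rs s = real m + (if s then eps else - eps)"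
  by (simp add: rsig_def)

lemma S_eq: "S s = insert (rs s) C"
  by (auto simp: Sset_def Cset_def)

lemma finite_C: "finite C" by (simp add: Cset_def)
lemma finite_S: "finite (S s)" by (simp add: S_eq finite_C)

lemma real_ne_rp: "real k \<noteq> rp i"
proof
  assume "real k = rp i"
  then have "real k + 0 = real (ox i) + offs v m eps i" by (simp add: rp_eq)
  then have "offs v m eps i = 0" using cmp_eq[of 0 "offs v m eps i"] offs_small by simp
  then show False using offs_abs[of i] eps0 by simp
qed

lemma real_ne_rs: "real k \<noteq> rs s"
proof
  assume "real k = rs s"
  then have "real k + 0 = real m + (if s then eps else - eps)" by (simp add: rs_eq)
  then have "(if s then eps else - eps) = 0" using cmp_eq[of 0 "if s then eps else - eps"] eps0 eps1 by simp
  then show False using eps0 by (simp split: if_splits)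
qed

lemma rp_ne_rs: "1 \<le> i \<Longrightarrow> i < p \<Longrightarrow> rp i \<noteq> rs s"
proof
  assume i: "1 \<le> i" "i < p" and "rp i = rs s"
  then have "real (ox i) + offs v m eps i = real m + (if s then eps else - eps)" by (simp add: rp_eq rs_eq)
  then have "ox i = m" using cmp_eq[of "offs v m eps i" "if s then eps else - eps"] offs_small eps0 eps1 by simp
  then show False using orb_ne_m[OF cyc mp i] by simp
qed

lemma rp_inj: "1 \<le> i \<Longrightarrow> i < p \<Longrightarrow> 1 \<le> i' \<Longrightarrow> i' < p \<Longrightarrow> rp i = rp i' \<Longrightarrow> i = i'"
  using cmp_eq[OF offs_small offs_small] orb_inj[OF cyc mp] by (simp add: rp_eq)

lemma C_form: "z \<in> C \<Longrightarrow> \<exists>k<p. \<exists>t. z = real k + t \<and> \<bar>t\<bar> \<le> eps \<and> (k = m \<longrightarrow> t = 0)"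
proof -
  assume "z \<in> C"
  then consider (a) k where "k < p" "z = real k" | (b) i where "1 \<le> i" "i \<le> j" "z = rp i"
    by (auto simp: Cset_def)
  then show ?thesis
  proof cases
    case a then show ?thesis using eps0 by (intro exI[of _ k]) auto
  next
    case b
    have "ox i \<noteq> m" using orb_ne_m[OF cyc mp] b jp by simp
    then show ?thesis using b offs_abs orb_lt[OF cyc mp] rp_eq
      by (intro exI[of _ "ox i"]) auto
  qed
qed

lemma gap: "z \<in> C \<Longrightarrow> z \<noteq> real m \<Longrightarrow> z < rs False \<or> rs True < z"
proof -
  assume z: "z \<in> C" "z \<noteq> real m"
  then obtain k t where kt: "k < p" "z = real k + t" "\<bar>t\<bar> \<le> eps" "k = m \<longrightarrow> t = 0"
    using C_form by blast
  have "k \<noteq> m" using kt z by auto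
  then consider "k < m" | "m < k" by arith
  then show ?thesis
  proof cases
    case 1
    then have "real k + 1 \<le> real m" by (metis Suc_leI of_nat_Suc of_nat_le_iff add.commute)
    then show ?thesis using kt eps1 by (auto simp: rs_eq)
  next
    case 2
    then have "real m + 1 \<le> real k" by (metis Suc_leI of_nat_Suc of_nat_le_iff add.commute)
    then show ?thesis using kt eps1 by (auto simp: rs_eq)
  qed
qed

lemma rs_order: "rs False < real m" "real m < rs True" "rs False < rs True"
  using eps0 by (auto simp: rs_eq)

lemma rs_notin: "rs s \<notin> C"
proof
  assume "rs s \<in> C"
  moreover have "rs s \<noteq> real m" using eps0 by (auto simp: rs_eq)
  ultimately have "rs s < rs False \<or> rs True < rs s" using gap by blast
  then show False using rs_order by (cases s) auto
qed

lemma m_in_C: "real m \<in> C" using mp by (simp add: Cset_def)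
lemma rp_in_C: "1 \<le> i \<Longrightarrow> i \<le> j \<Longrightarrow> rp i \<in> C" by (simp add: Cset_def)
lemma real_in_C: "k < p \<Longrightarrow> real k \<in> C" by (simp add: Cset_def)

lemma card_C: "card C = p + j"
proof -
  have "card (real ` {..<p}) = p" by (simp add: card_image)
  moreover have "inj_on rp {1..j}" by (rule inj_onI) (use rp_inj jp in auto)
  then have "card (rp ` {1..j}) = j" by (simp add: card_image)
  moreover have "real ` {..<p} \<inter> rp ` {1..j} = {}" using real_ne_rp by auto
  ultimately show ?thesis unfolding Cset_def by (simp add: card_Un_disjoint)
qed

lemma card_S: "card (S s) = p + j + 1"
  using card_C rs_notin finite_C by (simp add: S_eq)

end



context sett
begin

abbreviation "idx s y \<equiv> card {z \<in> S s. z < y}"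
abbreviation "a0 \<equiv> card {z \<in> C. z < real m}"
abbreviation "g s \<equiv> gmap p v m j eps s"
definition "phi y = (if y = rs False then rs True else y)"

lemma set_rsF: "{z \<in> C. z < rs False} = {z \<in> C. z < real m}"
  using gap rs_order by fastforce

lemma idx_rsF: "idx False (rs False) = a0"
proof -
  have "{z \<in> S False. z < rs False} = {z \<in> C. z < rs False}" by (auto simp: S_eq)
  then show ?thesis using set_rsF by simp
qed

lemma idx_mF: "idx False (real m) = Suc a0"
proof -
  have "{z \<in> S False. z < real m} = insert (rs False) {z \<in> C. z < real m}"
    using rs_order by (auto simp: S_eq)
  then show ?thesis using rs_notin finite_C by simp
qed

lemma idx_mT: "idx True (real m) = a0"
proof -
  have "{z \<in> S True. z < real m} = {z \<in> C. z < real m}"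
    using rs_order by (auto simp: S_eq)
  then show ?thesis by simp
qed

lemma lt_rsT: "z \<in> C \<Longrightarrow> z < rs True \<Longrightarrow> z \<noteq> real m \<Longrightarrow> z < real m"
  using gap rs_order by (meson less_trans not_less_iff_gr_or_eq)

lemma idx_rsT: "idx True (rs True) = Suc a0"
proof -
  have "{z \<in> S True. z < rs True} = insert (real m) {z \<in> C. z < real m}"
    using rs_order m_in_C lt_rsT by (auto simp: S_eq)
  then show ?thesis using finite_C by simp
qed

lemma idx_common: "y \<in> C \<Longrightarrow> y \<noteq> real m \<Longrightarrow> idx True y = idx False y"
proof -
  assume y: "y \<in> C" "y \<noteq> real m"
  from gap[OF y] show ?thesis
  proof
    assume "y < rs False"
    then have "{z \<in> S True. z < y} = {z \<in> C. z < y}" "{z \<in> S False. z < y} = {z \<in> C. z < y}"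
      using rs_order by (auto simp: S_eq)
    then show ?thesis by simp
  next
    assume "rs True < y"
    then have "{z \<in> S True. z < y} = insert (rs True) {z \<in> C. z < y}"
      "{z \<in> S False. z < y} = insert (rs False) {z \<in> C. z < y}"
      using rs_order by (auto simp: S_eq)
    then show ?thesis using rs_notin finite_C by simp
  qed
qed

lemma tau_def2: "tau a k = (if k = a then Suc a else if k = Suc a then a else k)"
  by (simp add: tau_def)

lemma idx_phi: "y \<in> S False \<Longrightarrow> idx True (phi y) = tau a0 (idx False y)"
proof -
  assume yS: "y \<in> S False"
  show ?thesis
  proof (cases "y = rs False")
    case True then show ?thesis using idx_rsF idx_rsT by (simp add: phi_def tau_def)
  next
    case False
    then have yC: "y \<in> C" using yS by (simp add: S_eq)
    show ?thesis
    proof (cases "y = real m")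
      case True then show ?thesis using idx_mF idx_mT real_ne_rs by (simp add: phi_def tau_def)
    next
      case False
      have "idx False y \<noteq> idx False (rs False)"
        using idx_inj[OF finite_S yS] \<open>y \<noteq> rs False\<close> by (auto simp: S_eq)
      moreover have "idx False y \<noteq> idx False (real m)"
        using idx_inj[OF finite_S yS] False m_in_C by (auto simp: S_eq)
      ultimately show ?thesis using idx_common[OF yC False] \<open>y \<noteq> rs False\<close> idx_rsF idx_mF
        by (simp add: phi_def tau_def)
    qed
  qed
qed

lemma the_rp:
  assumes "\<exists>i. 1 \<le> i \<and> i < j \<and> y = rp i"
  shows "\<exists>i0. 1 \<le> i0 \<and> i0 < j \<and> y = rp i0 \<and> (THE i. 1 \<le> i \<and> i < j \<and> y = rp i) = i0"
proof -
  obtain i0 where i0: "1 \<le> i0" "i0 < j" "y = rp i0" using assms by blast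
  have "(THE i. 1 \<le> i \<and> i < j \<and> y = rp i) = i0"
    apply (rule the_equality)
    using i0 apply simp
    using i0 rp_inj jp by (metis order.strict_trans)
  then show ?thesis using i0 by blast
qed

lemma real_ne_phi: "phi (real k) = real k"
  using real_ne_rs by (simp add: phi_def)

lemma g_C:
  assumes yC: "y \<in> C"
  shows "g True y = phi (g False y) \<and> g False y \<in> S False"
proof -
  have ne: "y \<noteq> rs True" "y \<noteq> rs False" using yC rs_notin by auto
  show ?thesis
  proof (cases "y = rp j")
    case True then show ?thesis using ne m_in_C real_ne_phi by (simp add: gmap_def S_eq)
  next
    case nj: False
    show ?thesis
    proof (cases "\<exists>i. 1 \<le> i \<and> i < j \<and> y = rp i")
      case True
      obtain i0 where i0: "1 \<le> i0" "i0 < j" "y = rp i0" "(THE i. 1 \<le> i \<and> i < j \<and> y = rp i) = i0"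
        using the_rp[OF True] by blast
      have "rp (Suc i0) \<noteq> rs False" using rp_ne_rs i0 jp by simp
      moreover have "rp (Suc i0) \<in> C" using rp_in_C i0 by simp
      ultimately show ?thesis using ne nj True i0(4) by (simp add: gmap_def S_eq phi_def)
    next
      case nex: False
      show ?thesis
      proof (cases "y = real (ox (p - 1))")
        case True
        have c: "(\<exists>i. 1 \<le> i \<and> i < j \<and> y = rp i) \<longleftrightarrow> False" "(y = rp j) \<longleftrightarrow> False"
          "(y = rs True) \<longleftrightarrow> False" "(y = rs False) \<longleftrightarrow> False"
          "(y = real (ox (p - 1))) \<longleftrightarrow> True" using nex nj ne True by auto
        show ?thesis unfolding gmap_def c by (simp add: S_eq phi_def)
      next
        case False
        have "\<exists>k<p. y = real k"
        proof -
          from yC consider (a) k where "k < p" "y = real k" | (b) i where "1 \<le> i" "i \<le> j" "y = rp i"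
            by (auto simp: Cset_def)
          then show ?thesis
          proof cases
            case a then show ?thesis by blast
          next
            case b
            show ?thesis
            proof (cases "i = j")
              case True with b nj show ?thesis by simp
            next
              case False then have "i < j" using b by simp
              with b nex have False by blast
              then show ?thesis ..
            qed
          qed
        qed
        then obtain k where k: "k < p" "y = real k" by blast
        have "v k < p" using v_lt[OF cyc] k by simp
        have c: "(\<exists>i. 1 \<le> i \<and> i < j \<and> y = rp i) \<longleftrightarrow> False" "(y = rp j) \<longleftrightarrow> False"
          "(y = rs True) \<longleftrightarrow> False" "(y = rs False) \<longleftrightarrow> False"
          "(y = real (ox (p - 1))) \<longleftrightarrow> False" using nex nj ne False by auto
        show ?thesis unfolding gmap_def c using k \<open>v k < p\<close> real_ne_phi real_in_C
          by (simp add: S_eq)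
      qed
    qed
  qed
qed

lemma one_lt_p: "1 < p" using j1 jp by simp

lemma g_all:
  assumes "y \<in> S False"
  shows "g True (phi y) = phi (g False y) \<and> g False y \<in> S False"
proof (cases "y = rs False")
  case True
  have "rp 1 \<noteq> rs False" using rp_ne_rs one_lt_p by simp
  then show ?thesis using True rp_in_C[of 1] j1 rs_order by (simp add: gmap_def phi_def S_eq)
next
  case False
  then have "y \<in> C" using assms by (simp add: S_eq)
  then show ?thesis using g_C False by (simp add: phi_def)
qed

lemma g_rsF: "g False (rs False) = rp 1" by (simp add: gmap_def)

lemma g_m: "g False (real m) = real (ox 1)"
proof -
  have "1 \<le> p - 1" "p - 1 < p" using one_lt_p by auto
  then have "ox (p - 1) \<noteq> m" using orb_ne_m[OF cyc mp, of "p - 1"] by blast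
  then have "real m \<noteq> real (ox (p - 1))" by simp
  moreover have "real m \<noteq> rp i" for i using real_ne_rp by simp
  ultimately show ?thesis using real_ne_rs orb_Suc[OF cyc mp, of 0] orb_0[OF cyc mp] by (simp add: gmap_def)
qed

lemma g_q: "g False (real (ox (p - 1))) = rs False"
  using real_ne_rs real_ne_rp by (simp add: gmap_def)

lemma g_rpj: "g False (rp j) = real m"
  using rp_ne_rs j1 jp by (simp add: gmap_def)

lemma ups_idx: "y \<in> S s \<Longrightarrow> upsig p v m j eps s (idx s y) = idx s (g s y)"
  unfolding upsig_def Let_def using sorted_nth_idx[OF finite_S] by simp

lemma a0_lt: "Suc a0 < p + j + 1"
  using idx_lt_card[OF finite_S, of "real m" False] idx_mF card_S m_in_C by (simp add: S_eq)

lemma phi_in: "y \<in> S False \<Longrightarrow> phi y \<in> S True"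
  by (auto simp: phi_def S_eq)

lemma hyp: "k < p + j + 1 \<Longrightarrow>
   upsig p v m j eps True k = tau a0 (upsig p v m j eps False (tau a0 k))"
proof -
  assume k: "k < p + j + 1"
  define k' where "k' = tau a0 k"
  have k': "k' < card (S False)" using k a0_lt card_S unfolding k'_def by (auto simp: tau_def)
  define y where "y = sorted_list_of_set (S False) ! k'"
  have yS: "y \<in> S False" and iy: "idx False y = k'"
    using idx_sorted_nth[OF finite_S k'] unfolding y_def by auto
  have "idx True (phi y) = k" using idx_phi[OF yS] iy unfolding k'_def by simp
  then have "upsig p v m j eps True k = idx True (g True (phi y))"
    using ups_idx[OF phi_in[OF yS]] by simp
  also have "... = idx True (phi (g False y))" using g_all[OF yS] by simp
  also have "... = tau a0 (idx False (g False y))" using idx_phi g_all[OF yS] by simp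
  also have "idx False (g False y) = upsig p v m j eps False k'"
    using ups_idx[OF yS] iy by simp
  finally show ?thesis unfolding k'_def .
qed

end



theorem mainTheorem1:
  fixes p m e j :: nat and v :: "nat \<Rightarrow> nat" and eps :: real and wp wm :: "nat list"
  assumes "p \<ge> 3"
    and "cyclic_perm p v"
    and "unimodal p v m"
    and "e + 2 \<le> p"
    and "min (v e) (v (e + 1)) < m" and "m < max (v e) (v (e + 1))"
    and "1 \<le> j" and "j \<le> p - 1"
    and "(orb v m j = e \<and> odd (rho v m j)) \<or> (orb v m j = e + 1 \<and> even (rho v m j))"
    and "0 < eps" and "eps < 1/4"
    and "ppb_word (p + j + 1) (upsig p v m j eps True) wp"
    and "ppb_word (p + j + 1) (upsig p v m j eps False) wm"
  shows "(e < m \<longrightarrow> braid_conj (p + j + 1) (pos_word wp) (pos_word wm)) \<and>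
         (m \<le> e \<longrightarrow> braid_revconj (p + j + 1) (pos_word wp) (pos_word wm))"
proof -
  note A = assms
  have um: "1 \<le> m" "m + 2 \<le> p"
    and inc: "\<And>a b. a < b \<Longrightarrow> b \<le> m \<Longrightarrow> v a < v b"
    and dec: "\<And>a b. m \<le> a \<Longrightarrow> a < b \<Longrightarrow> b \<le> p - 1 \<Longrightarrow> v b < v a"
    using A(3) unfolding unimodal_def by auto
  have mp: "m < p" using um by simp
  interpret sett p m j v eps
    by unfold_locales (use A mp in auto)
  define q where "q = orb v m (p - 1)"
  have vq: "v q = m" unfolding q_def using v_q[OF cyc mp] .
  have qp: "q < p" unfolding q_def using orb_lt[OF cyc mp] .
  define N where "N = p + j + 1"
  define q1 where "q1 = idx False (real q)"
  define q2 where "q2 = idx False (rp j)"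
  have qS: "real q \<in> S False" using real_in_C[OF qp] by (simp add: S_eq)
  have rpjS: "rp j \<in> S False" using rp_in_C[of j] j1 by (simp add: S_eq)
  have rp1S: "rp 1 \<in> S False" using rp_in_C[of 1] j1 by (simp add: S_eq)
  have mS: "real m \<in> S False" using m_in_C by (simp add: S_eq)
  have rsS: "rs False \<in> S False" by (simp add: S_eq)
  have ox1S: "real (ox 1) \<in> S False" using real_in_C[OF orb_lt[OF cyc mp]] by (simp add: S_eq)
  have q1N: "q1 < N" unfolding q1_def N_def using idx_lt_card[OF finite_S qS] card_S by simp
  have q2N: "q2 < N" unfolding q2_def N_def using idx_lt_card[OF finite_S rpjS] card_S by simp
  have u_a: "upsig p v m j eps False a0 = idx False (rp 1)"
    using ups_idx[OF rsS] idx_rsF g_rsF by simp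
  have u_sa: "upsig p v m j eps False (Suc a0) = idx False (real (ox 1))"
    using ups_idx[OF mS] idx_mF g_m by simp
  have u_q1: "upsig p v m j eps False q1 = a0"
    using ups_idx[OF qS] g_q idx_rsF unfolding q1_def q_def by simp
  have u_q2: "upsig p v m j eps False q2 = Suc a0"
    using ups_idx[OF rpjS] g_rpj idx_mF unfolding q2_def by simp
  have rho1: "rho v m 1 = 0" by (simp add: rho_def)
  have "rp 1 < real (ox 1)" using rho1 eps0 by (simp add: rpt_def)
  then have asc: "upsig p v m j eps False a0 < upsig p v m j eps False (Suc a0)"
    using u_a u_sa idx_strict_mono[OF finite_S rp1S ox1S] by simp
  have ne: "upsig p v m j eps False a0 \<noteq> a0"
  proof
    assume "upsig p v m j eps False a0 = a0"
    then have "idx False (rp 1) = idx False (rs False)" using u_a idx_rsF by simp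
    then have "rp 1 = rs False" using idx_inj[OF finite_S rp1S rsS] by simp
    then show False using rp_ne_rs one_lt_p by simp
  qed
  note BC = braid_cases[OF A(12)[folded N_def] A(13)[folded N_def] a0_lt[folded N_def]
      hyp[folded N_def] asc q1N q2N u_q1 u_q2]
  have rpj: "rp j = real e + eps \<or> rp j = real e + 1 - eps"
    using A(9) by (auto simp: rpt_def)
  show ?thesis
  proof (intro conjI impI)
    assume em: "e < m"
    have "v e < v (e + 1)" using inc em by simp
    then have ve: "v e < m" "m < v (e + 1)" using A(5,6) by auto
    have "e + 1 \<le> q"
    proof (rule ccontr)
      assume "\<not> e + 1 \<le> q"
      then have "q \<le> e" by simp
      then show False
      proof (cases "q = e")
        case True then show False using vq ve by simp
      next
        case False then have "q < e" using \<open>q \<le> e\<close> by simp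
        then have "v q < v e" using inc em by simp
        then show False using vq ve by simp
      qed
    qed
    then have "real e + 1 \<le> real q" by (metis of_nat_Suc of_nat_le_iff Suc_eq_plus1 add.commute)
    then have "rp j < real q" using rpj eps0 eps1 by auto
    then have "q2 < q1" unfolding q1_def q2_def using idx_strict_mono[OF finite_S rpjS qS] by simp
    then show "braid_conj (p + j + 1) (pos_word wp) (pos_word wm)" using BC(1) unfolding N_def by simp
  next
    assume me: "m \<le> e"
    have "v (e + 1) < v e" using dec me A(4) by simp
    then have ve: "v (e + 1) < m" "m < v e" using A(5,6) by auto
    have "q \<le> e"
    proof (rule ccontr)
      assume "\<not> q \<le> e"
      then have "e + 1 \<le> q" by simp
      then show False
      proof (cases "q = e + 1")
        case True then show False using vq ve by simp
      next
        case False then have "e + 1 < q" using \<open>e + 1 \<le> q\<close> by simp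
        then have "v q < v (e + 1)" using dec me qp by simp
        then show False using vq ve by simp
      qed
    qed
    then have "real q \<le> real e" by simp
    then have "real q < rp j" using rpj eps0 eps1 by auto
    then have "q1 < q2" unfolding q1_def q2_def using idx_strict_mono[OF finite_S qS rpjS] by simp
    then show "braid_revconj (p + j + 1) (pos_word wp) (pos_word wm)"
      using BC(2) ne unfolding N_def by simp
  qed
qed


end
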